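(* Let $G$ be an amenable group, let $E$ be a Følner approximation of $G$, and let $C\subseteq{}^*G$ be internal with $\mathrm{st}(|C\cap E|/|E|)=\gamma>0$. Let $0\le\varepsilon<\gamma^2$ and $k=\left\lfloor\frac{\gamma-\varepsilon}{\gamma^2-\varepsilon}\right\rfloor$. Define $$\mathcal{D}^E_\varepsilon(C)=\left\{g\in G\;\Big|\;\mathrm{st}\left(\frac{|C\cap gC\cap E|}{|E|}\right)>\varepsilon\right\}.$$ Then for every $P\subseteq G$ and every $g_0\in P$ there exists $F\subseteq P$ with $g_0\in F$, $|F|\le k$ and $P\subseteq F\cdot\mathcal{D}^E_\varepsilon(C)$.
   Context: $G$ is amenable: for every finite $H\subseteq G$ and $\varepsilon>0$ there is a nonempty finite $K$ with $|hK\triangle K|/|K|<\varepsilon$ for all $h\in H$. Nonstandard conventions: ${}^*X$ is the hyperextension of $X$, $G$ is identified with its image in ${}^*G$, $\xi\approx\zeta$ means $\xi-\zeta$ is infinitesimal, $\mathrm{st}$ is the standard part. A Følner approximation of $G$ is a nonempty hyperfinite set $E\subseteq{}^*G$ such that $|gE\triangle E|/|E|\approx0$ for every $g\in G$. *)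

theory Defs
  imports "HOL-Analysis.Analysis" "HOL-Algebra.Coset"
begin

definition amenable :: "('a, 'b) monoid_scheme \<Rightarrow> bool" where
  "amenable G \<longleftrightarrow>
     (\<forall>H \<subseteq> carrier G. finite H \<longrightarrow> (\<forall>\<epsilon>>0::real.
        (\<exists>K. finite K \<and> K \<noteq> {} \<and> K \<subseteq> carrier G \<and>
             (\<forall>h\<in>H. real (card (((h <#\<^bsub>G\<^esub> K) - K) \<union> (K - (h <#\<^bsub>G\<^esub> K))))
                       / real (card K) < \<epsilon>))))"

text \<open>The nonstandard extension is modelled as the ultrapower over a free
  ultrafilter U on an index type 'i: elements of *G are (classes of) maps 'i => G,
  internal subsets of *G are (classes of) maps 'i => G set, hyperfinite sets have
  eventually finite components, internal cardinalities are taken componentwise.\<close>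
definition free_ultrafilter :: "'i filter \<Rightarrow> bool" where
  "free_ultrafilter U \<longleftrightarrow> U \<noteq> bot \<and> (\<forall>P. eventually P U \<or> eventually (\<lambda>x. \<not> P x) U)
     \<and> (\<forall>x. eventually (\<lambda>i. i \<noteq> x) U)"

definition st :: "'i filter \<Rightarrow> ('i \<Rightarrow> real) \<Rightarrow> real" where
  "st U x = Lim U x"

definition internal_subset :: "('a, 'b) monoid_scheme \<Rightarrow> 'i filter \<Rightarrow> ('i \<Rightarrow> 'a set) \<Rightarrow> bool" where
  "internal_subset G U C \<longleftrightarrow> eventually (\<lambda>n. C n \<subseteq> carrier G) U"

definition folner_approx :: "('a, 'b) monoid_scheme \<Rightarrow> 'i filter \<Rightarrow> ('i \<Rightarrow> 'a set) \<Rightarrow> bool" where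
  "folner_approx G U E \<longleftrightarrow>
     eventually (\<lambda>n. finite (E n) \<and> E n \<noteq> {} \<and> E n \<subseteq> carrier G) U \<and>
     (\<forall>g\<in>carrier G.
        st U (\<lambda>n. real (card (((g <#\<^bsub>G\<^esub> E n) - E n) \<union> (E n - (g <#\<^bsub>G\<^esub> E n))))
                   / real (card (E n))) = 0)"

definition Dset :: "('a, 'b) monoid_scheme \<Rightarrow> 'i filter \<Rightarrow> ('i \<Rightarrow> 'a set) \<Rightarrow> real
                     \<Rightarrow> ('i \<Rightarrow> 'a set) \<Rightarrow> 'a set" where
  "Dset G U E \<epsilon> C = {g \<in> carrier G.
      st U (\<lambda>n. real (card (C n \<inter> (g <#\<^bsub>G\<^esub> C n) \<inter> E n)) / real (card (E n))) > \<epsilon>}"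

end

theory Submission imports Defs begin

lemma ultra_lim:
  fixes f :: "'i \<Rightarrow> real"
  assumes U: "free_ultrafilter U" and ev: "eventually (\<lambda>n. f n \<in> {a..b}) U"
  shows "(f \<longlongrightarrow> st U f) U"
proof -
  have Ubot: "U \<noteq> bot" and ult: "\<And>P. eventually P U \<or> eventually (\<lambda>x. \<not> P x) U"
    using U unfolding free_ultrafilter_def by auto
  have "filtermap f U \<noteq> bot" using Ubot by (simp add: filtermap_bot_iff)
  moreover have "eventually (\<lambda>x. x \<in> {a..b}) (filtermap f U)"
    using ev by (simp add: eventually_filtermap)
  ultimately obtain x where x: "inf (nhds x) (filtermap f U) \<noteq> bot"
    using compact_filter[THEN iffD1, OF compact_Icc] by blast
  have lim: "(f \<longlongrightarrow> x) U"
  proof (rule topological_tendstoI)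
    fix S :: "real set" assume S: "open S" "x \<in> S"
    show "eventually (\<lambda>n. f n \<in> S) U"
    proof (rule ccontr)
      assume "\<not> eventually (\<lambda>n. f n \<in> S) U"
      then have "eventually (\<lambda>n. f n \<notin> S) U" using ult by blast
      then have "eventually (\<lambda>y. y \<notin> S) (filtermap f U)" by (simp add: eventually_filtermap)
      moreover have "eventually (\<lambda>y. y \<in> S) (nhds x)" using S by (rule eventually_nhds_in_open)
      ultimately have "eventually (\<lambda>_. False) (inf (nhds x) (filtermap f U))"
        unfolding eventually_inf by blast
      then show False using x by (simp add: eventually_False)
    qed
  qed
  then have "st U f = x" unfolding st_def using Ubot by (simp add: tendsto_Lim)
  then show ?thesis using lim by simp
qed

lemma ratio_01: "A \<subseteq> Y \<Longrightarrow> real (card A) / real (card Y) \<in> {0..1}"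
proof (cases "finite Y")
  case True
  assume "A \<subseteq> Y"
  then have "card A \<le> card Y" using True by (simp add: card_mono)
  then show ?thesis by (cases "card Y = 0") (auto simp: divide_le_eq_1)
qed simp

lemma lcos_image: "g <#\<^bsub>G\<^esub> X = (\<lambda>x. g \<otimes>\<^bsub>G\<^esub> x) ` X"
  unfolding l_coset_def by auto

lemma (in group) card_lcos: "X \<subseteq> carrier G \<Longrightarrow> g \<in> carrier G \<Longrightarrow> card (g <# X) = card X"
  unfolding lcos_image by (rule card_image) (unfold inj_on_def, metis Units_eq Units_l_cancel subsetD)

lemma (in group) symdiff_ratio:
  assumes "finite E" "E \<subseteq> carrier G" "g \<in> carrier G"
  shows "real (card (((g <# E) - E) \<union> (E - (g <# E)))) / real (card E) \<in> {0..2}"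
proof -
  have "card (((g <# E) - E) \<union> (E - (g <# E))) \<le> card (g <# E) + card E"
    by (rule order_trans[OF card_Un_le]) (intro add_mono card_mono, auto simp: assms lcos_image)
  also have "\<dots> = 2 * card E" using assms by (simp add: card_lcos)
  finally show ?thesis by (cases "card E = 0") (auto simp: divide_le_eq)
qed

lemma (in group) shift_lemma:
  assumes U: "free_ultrafilter U" and fol: "folner_approx G U E" and g: "g \<in> carrier G"
  shows "st U (\<lambda>n. real (card (A n \<inter> (g <# E n))) / real (card (E n)))
       = st U (\<lambda>n. real (card (A n \<inter> E n)) / real (card (E n)))"
proof -
  define d where "d n = real (card (((g <# E n) - E n) \<union> (E n - (g <# E n)))) / real (card (E n))" for n
  define x where "x n = real (card (A n \<inter> (g <# E n))) / real (card (E n))" for n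
  define y where "y n = real (card (A n \<inter> E n)) / real (card (E n))" for n
  have evE: "eventually (\<lambda>n. finite (E n) \<and> E n \<noteq> {} \<and> E n \<subseteq> carrier G) U"
    using fol unfolding folner_approx_def by blast
  have d0: "st U d = 0" using fol g unfolding folner_approx_def d_def by blast
  have "eventually (\<lambda>n. d n \<in> {0..2}) U"
    using evE by eventually_elim (use g symdiff_ratio in \<open>auto simp: d_def\<close>)
  then have dlim: "(d \<longlongrightarrow> 0) U" using ultra_lim[OF U] d0 by fastforce
  have xb: "eventually (\<lambda>n. x n \<in> {0..1}) U"
    using evE
  proof eventually_elim
    case (elim n)
    then have "card (A n \<inter> (g <# E n)) \<le> card (E n)"
      using card_mono[of "g <# E n" "A n \<inter> (g <# E n)"] card_lcos[of "E n" g] g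
      by (auto simp: lcos_image)
    then show ?case unfolding x_def by (cases "card (E n) = 0") (auto simp: divide_le_eq_1)
  qed
  have yb: "\<And>n. y n \<in> {0..1}" unfolding y_def by (rule ratio_01) auto
  have xl: "(x \<longlongrightarrow> st U x) U" using ultra_lim[OF U xb] .
  have yl: "(y \<longlongrightarrow> st U y) U" using ultra_lim[OF U, of y 0 1] yb by simp
  have "eventually (\<lambda>n. norm (x n - y n) \<le> d n) U"
    using evE
  proof eventually_elim
    case (elim n)
    have fg: "finite (g <# E n)" using elim by (simp add: lcos_image)
    let ?S = "((g <# E n) - E n) \<union> (E n - (g <# E n))"
    have S1: "card ((g <# E n) - E n) \<le> card ?S" by (rule card_mono) (use elim fg in auto)
    have S2: "card (E n - (g <# E n)) \<le> card ?S" by (rule card_mono) (use elim fg in auto)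
    have a1: "card (A n \<inter> (g <# E n)) \<le> card (A n \<inter> E n) + card ((g <# E n) - E n)"
      by (rule order_trans[OF _ card_Un_le], rule card_mono) (use elim fg in auto)
    have a2: "card (A n \<inter> E n) \<le> card (A n \<inter> (g <# E n)) + card (E n - (g <# E n))"
      by (rule order_trans[OF _ card_Un_le], rule card_mono) (use elim fg in auto)
    have "\<bar>real (card (A n \<inter> (g <# E n))) - real (card (A n \<inter> E n))\<bar> \<le> real (card ?S)"
      using a1 a2 S1 S2 by linarith
    moreover have "x n - y n = (real (card (A n \<inter> (g <# E n))) - real (card (A n \<inter> E n))) / real (card (E n))"
      unfolding x_def y_def by (simp add: diff_divide_distrib)
    ultimately show ?case unfolding d_def
      by (simp add: abs_divide divide_right_mono)
  qed
  then have "((\<lambda>n. x n - y n) \<longlongrightarrow> 0) U" using dlim by (rule Lim_null_comparison)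
  moreover have "((\<lambda>n. x n - y n) \<longlongrightarrow> st U x - st U y) U" using xl yl by (rule tendsto_diff)
  moreover have "U \<noteq> bot" using U unfolding free_ultrafilter_def by blast
  ultimately have "st U x - st U y = 0" using tendsto_unique by blast
  then show ?thesis unfolding x_def y_def by simp
qed

lemma st_cong: "eventually (\<lambda>n. f n = g n) U \<Longrightarrow> st U f = st U g"
  unfolding st_def by (rule Lim_cong) auto

lemma (in group) lcos_Int:
  "X \<subseteq> carrier G \<Longrightarrow> Y \<subseteq> carrier G \<Longrightarrow> g \<in> carrier G \<Longrightarrow> g <# (X \<inter> Y) = (g <# X) \<inter> (g <# Y)"
  unfolding lcos_image
  by (rule inj_on_image_Int[where C="carrier G"]) (unfold inj_on_def, metis Units_eq Units_l_cancel subsetD, auto)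

definition sfun :: "('a, 'b) monoid_scheme \<Rightarrow> 'i filter \<Rightarrow> ('i \<Rightarrow> 'a set) \<Rightarrow> ('i \<Rightarrow> 'a set) \<Rightarrow> 'a \<Rightarrow> 'a \<Rightarrow> real" where
  "sfun G U E C f f' = st U (\<lambda>n. real (card ((f <#\<^bsub>G\<^esub> C n) \<inter> (f' <#\<^bsub>G\<^esub> C n) \<inter> E n)) / real (card (E n)))"

lemma sfun_sym: "sfun G U E C f f' = sfun G U E C f' f"
  unfolding sfun_def by (simp add: Int_commute)

lemma (in group) claimA:
  assumes U: "free_ultrafilter U" and fol: "folner_approx G U E" and IC: "internal_subset G U C"
    and f: "f \<in> carrier G" and f': "f' \<in> carrier G"
  shows "st U (\<lambda>n. real (card (C n \<inter> ((inv f \<otimes> f') <# C n) \<inter> E n)) / real (card (E n))) = sfun G U E C f f'"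
proof -
  have evE: "eventually (\<lambda>n. E n \<subseteq> carrier G) U"
    using fol unfolding folner_approx_def by (auto elim: eventually_mono)
  have evC: "eventually (\<lambda>n. C n \<subseteq> carrier G) U" using IC unfolding internal_subset_def .
  have "eventually (\<lambda>n. real (card (C n \<inter> ((inv f \<otimes> f') <# C n) \<inter> E n)) / real (card (E n))
      = real (card ((f <# C n) \<inter> (f' <# C n) \<inter> (f <# E n))) / real (card (E n))) U"
    using evE evC
  proof eventually_elim
    case (elim n)
    have h: "inv f \<otimes> f' \<in> carrier G" using f f' by simp
    have hC: "(inv f \<otimes> f') <# C n \<subseteq> carrier G" by (rule l_coset_subset_G) (use elim h in auto)
    have "f <# (C n \<inter> ((inv f \<otimes> f') <# C n) \<inter> E n) = (f <# C n) \<inter> (f <# ((inv f \<otimes> f') <# C n)) \<inter> (f <# E n)"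
      using elim hC f by (simp add: lcos_Int le_infI1)
    also have "f <# ((inv f \<otimes> f') <# C n) = f' <# C n"
      using elim h f f' by (simp add: lcos_m_assoc m_assoc[symmetric] lcos_mult_one)
    finally have "f <# (C n \<inter> ((inv f \<otimes> f') <# C n) \<inter> E n) = (f <# C n) \<inter> (f' <# C n) \<inter> (f <# E n)" .
    moreover have "card (f <# (C n \<inter> ((inv f \<otimes> f') <# C n) \<inter> E n)) = card (C n \<inter> ((inv f \<otimes> f') <# C n) \<inter> E n)"
      using elim f by (intro card_lcos) auto
    ultimately show ?case by simp
  qed
  then have "st U (\<lambda>n. real (card (C n \<inter> ((inv f \<otimes> f') <# C n) \<inter> E n)) / real (card (E n)))
      = st U (\<lambda>n. real (card ((f <# C n) \<inter> (f' <# C n) \<inter> (f <# E n))) / real (card (E n)))"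
    by (rule st_cong)
  also have "\<dots> = sfun G U E C f f'"
    unfolding sfun_def by (rule shift_lemma[OF U fol f])
  finally show ?thesis .
qed

lemma (in group) sfun_diag:
  assumes U: "free_ultrafilter U" and fol: "folner_approx G U E" and IC: "internal_subset G U C"
    and f: "f \<in> carrier G"
  shows "sfun G U E C f f = st U (\<lambda>n. real (card (C n \<inter> E n)) / real (card (E n)))"
proof -
  have evC: "eventually (\<lambda>n. C n \<subseteq> carrier G) U" using IC unfolding internal_subset_def .
  have "sfun G U E C f f = st U (\<lambda>n. real (card (C n \<inter> ((inv f \<otimes> f) <# C n) \<inter> E n)) / real (card (E n)))"
    using claimA[OF U fol IC f f] by simp
  also have "\<dots> = st U (\<lambda>n. real (card (C n \<inter> E n)) / real (card (E n)))"
  proof (rule st_cong)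
    show "eventually (\<lambda>n. real (card (C n \<inter> ((inv f \<otimes> f) <# C n) \<inter> E n)) / real (card (E n)) = real (card (C n \<inter> E n)) / real (card (E n))) U"
      using evC by eventually_elim (use f in \<open>simp add: lcos_mult_one\<close>)
  qed
  finally show ?thesis .
qed

lemma cs_count:
  fixes A :: "'f \<Rightarrow> 'a set"
  assumes F: "finite F" and E: "finite E" and sub: "\<And>f. f \<in> F \<Longrightarrow> A f \<subseteq> E"
  shows "(\<Sum>f\<in>F. real (card (A f)))\<^sup>2 \<le> real (card E) * (\<Sum>f\<in>F. \<Sum>f'\<in>F. real (card (A f \<inter> A f')))"
proof -
  define S where "S x = (\<Sum>f\<in>F. (of_bool (x \<in> A f) :: real))" for x
  have c1: "real (card (A f)) = (\<Sum>x\<in>E. of_bool (x \<in> A f))" if "f \<in> F" for f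
  proof -
    have "E \<inter> {x. x \<in> A f} = A f" using sub[OF that] by auto
    then show ?thesis using E by simp
  qed
  have c2: "real (card (A f \<inter> A f')) = (\<Sum>x\<in>E. of_bool (x \<in> A f) * of_bool (x \<in> A f'))" if "f \<in> F" for f f'
  proof -
    have "E \<inter> {x. x \<in> A f \<and> x \<in> A f'} = A f \<inter> A f'" using sub[OF that] by auto
    moreover have "(\<Sum>x\<in>E. (of_bool (x \<in> A f) * of_bool (x \<in> A f') :: real)) = (\<Sum>x\<in>E. of_bool (x \<in> A f \<and> x \<in> A f'))"
      by (intro sum.cong) auto
    ultimately show ?thesis using E by simp
  qed
  have "(\<Sum>f\<in>F. real (card (A f))) = (\<Sum>x\<in>E. S x)"
    unfolding S_def using c1 by (simp add: sum.swap[of _ E F])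
  moreover have "(\<Sum>f\<in>F. \<Sum>f'\<in>F. real (card (A f \<inter> A f'))) = (\<Sum>x\<in>E. (S x)\<^sup>2)"
  proof -
    have "(\<Sum>f\<in>F. \<Sum>f'\<in>F. real (card (A f \<inter> A f'))) = (\<Sum>f\<in>F. \<Sum>f'\<in>F. \<Sum>x\<in>E. of_bool (x \<in> A f) * of_bool (x \<in> A f'))"
      by (intro sum.cong refl) (simp add: c2)
    also have "\<dots> = (\<Sum>x\<in>E. \<Sum>f\<in>F. \<Sum>f'\<in>F. of_bool (x \<in> A f) * of_bool (x \<in> A f'))"
      by (subst sum.swap, rule sum.cong, simp, subst sum.swap, simp)
    also have "\<dots> = (\<Sum>x\<in>E. (S x)\<^sup>2)"
      unfolding S_def power2_eq_square by (simp add: sum_product)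
    finally show ?thesis .
  qed
  ultimately show ?thesis using sum_squared_le_sum_of_squares[of S E] by (simp add: mult.commute)
qed

lemma (in group) claimB:
  assumes U: "free_ultrafilter U" and fol: "folner_approx G U E" and IC: "internal_subset G U C"
    and F: "finite F" "F \<subseteq> carrier G"
    and gam: "st U (\<lambda>n. real (card (C n \<inter> E n)) / real (card (E n))) = \<gamma>"
    and sep: "\<forall>f\<in>F. \<forall>f'\<in>F. f \<noteq> f' \<longrightarrow> sfun G U E C f f' \<le> \<epsilon>"
  shows "(real (card F) * \<gamma>)\<^sup>2 \<le> real (card F) * \<gamma> + real (card F) * (real (card F) - 1) * \<epsilon>"
proof -
  have Ubot: "U \<noteq> bot" using U unfolding free_ultrafilter_def by blast
  define b where "b f f' n = real (card ((f <# C n) \<inter> (f' <# C n) \<inter> E n)) / real (card (E n))" for f f' n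
  have bl: "((b f f') \<longlongrightarrow> sfun G U E C f f') U" for f f'
  proof -
    have "(b f f' \<longlongrightarrow> st U (b f f')) U"
      by (rule ultra_lim[OF U, of _ 0 1], unfold b_def, intro always_eventually allI ratio_01) auto
    moreover have "st U (b f f') = sfun G U E C f f'" unfolding sfun_def b_def by simp
    ultimately show ?thesis by simp
  qed
  have diag: "sfun G U E C f f = \<gamma>" if "f \<in> F" for f
    using sfun_diag[OF U fol IC] that F gam by auto
  have evE: "eventually (\<lambda>n. finite (E n)) U"
    using fol unfolding folner_approx_def by (auto elim: eventually_mono)
  have ev: "eventually (\<lambda>n. (\<Sum>f\<in>F. \<Sum>f'\<in>F. b f f' n) \<ge> (\<Sum>f\<in>F. b f f n)\<^sup>2) U"
    using evE
  proof eventually_elim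
    case (elim n)
    define c where "c = real (card (E n))"
    define X where "X = (\<Sum>f\<in>F. real (card ((f <# C n) \<inter> E n)))"
    define Y where "Y = (\<Sum>f\<in>F. \<Sum>f'\<in>F. real (card ((f <# C n) \<inter> E n \<inter> ((f' <# C n) \<inter> E n))))"
    have XY: "X\<^sup>2 \<le> c * Y" unfolding X_def Y_def c_def
      by (rule cs_count[OF F(1) elim]) auto
    have s1: "(\<Sum>f\<in>F. b f f n) = X / c"
      unfolding X_def c_def b_def by (simp add: sum_divide_distrib)
    have s2: "(\<Sum>f\<in>F. \<Sum>f'\<in>F. b f f' n) = Y / c"
    proof -
      have "\<And>f f'. (f <# C n) \<inter> E n \<inter> ((f' <# C n) \<inter> E n) = (f <# C n) \<inter> (f' <# C n) \<inter> E n" by blast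
      then show ?thesis unfolding Y_def c_def b_def by (simp add: sum_divide_distrib)
    qed
    have c0: "c \<ge> 0" unfolding c_def by simp
    have "(X / c)\<^sup>2 \<le> Y / c"
    proof (cases "c = 0")
      case False
      then have "c > 0" using c0 by simp
      then have "(X / c)\<^sup>2 = X\<^sup>2 / c / c" by (simp add: power2_eq_square)
      also have "\<dots> \<le> c * Y / c / c" using XY \<open>c > 0\<close> by (intro divide_right_mono) auto
      also have "\<dots> = Y / c" using \<open>c > 0\<close> by simp
      finally show ?thesis .
    qed simp
    then show ?case using s1 s2 by simp
  qed
  have lim1: "((\<lambda>n. (\<Sum>f\<in>F. b f f n)\<^sup>2) \<longlongrightarrow> (\<Sum>f\<in>F. sfun G U E C f f)\<^sup>2) U"
    by (intro tendsto_intros bl)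
  have lim2: "((\<lambda>n. \<Sum>f\<in>F. \<Sum>f'\<in>F. b f f' n) \<longlongrightarrow> (\<Sum>f\<in>F. \<Sum>f'\<in>F. sfun G U E C f f')) U"
    by (intro tendsto_intros bl)
  have le1: "(\<Sum>f\<in>F. sfun G U E C f f)\<^sup>2 \<le> (\<Sum>f\<in>F. \<Sum>f'\<in>F. sfun G U E C f f')"
    using tendsto_le[OF Ubot lim2 lim1 ev] .
  have eq1: "(\<Sum>f\<in>F. sfun G U E C f f) = real (card F) * \<gamma>"
    using diag by simp
  have le2: "(\<Sum>f'\<in>F. sfun G U E C f f') \<le> \<gamma> + (real (card F) - 1) * \<epsilon>" if f: "f \<in> F" for f
  proof -
    have "(\<Sum>f'\<in>F. sfun G U E C f f') = sfun G U E C f f + (\<Sum>f'\<in>F - {f}. sfun G U E C f f')"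
      using F(1) f by (rule sum.remove)
    also have "(\<Sum>f'\<in>F - {f}. sfun G U E C f f') \<le> real (card (F - {f})) * \<epsilon>"
      by (rule sum_bounded_above) (use sep f in auto)
    also have "real (card (F - {f})) = real (card F) - 1"
    proof -
      have "card F \<ge> 1" using F(1) f by (metis One_nat_def Suc_leI card_gt_0_iff empty_iff)
      then show ?thesis using F(1) f by (simp add: card_Diff_singleton of_nat_diff)
    qed
    finally show ?thesis using diag[OF f] by simp
  qed
  have "(\<Sum>f\<in>F. \<Sum>f'\<in>F. sfun G U E C f f') \<le> (\<Sum>f\<in>F. \<gamma> + (real (card F) - 1) * \<epsilon>)"
    by (rule sum_mono) (rule le2)
  also have "\<dots> = real (card F) * \<gamma> + real (card F) * (real (card F) - 1) * \<epsilon>"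
    by (simp add: algebra_simps)
  finally show ?thesis using le1 eq1 by simp
qed

theorem mainTheorem6:
  fixes G :: "('a, 'b) monoid_scheme" and U :: "'i filter"
    and E C :: "'i \<Rightarrow> 'a set" and \<gamma> \<epsilon> :: real
  assumes "group G" and "amenable G"
    and "free_ultrafilter U"
    and "folner_approx G U E"
    and "internal_subset G U C"
    and "st U (\<lambda>n. real (card (C n \<inter> E n)) / real (card (E n))) = \<gamma>" and "\<gamma> > 0"
    and "0 \<le> \<epsilon>" and "\<epsilon> < \<gamma>\<^sup>2"
  shows "\<forall>P \<subseteq> carrier G. \<forall>g0 \<in> P. \<exists>F \<subseteq> P. finite F \<and> g0 \<in> F \<and>
           int (card F) \<le> \<lfloor>(\<gamma> - \<epsilon>) / (\<gamma>\<^sup>2 - \<epsilon>)\<rfloor> \<and>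
           P \<subseteq> F <#>\<^bsub>G\<^esub> Dset G U E \<epsilon> C"
proof -
  interpret group G by fact
  note U = assms(3) and fol = assms(4) and IC = assms(5) and gam = assms(6)
  have Ubot: "U \<noteq> bot" using U unfolding free_ultrafilter_def by blast
  have ev01: "eventually (\<lambda>n. real (card (C n \<inter> E n)) / real (card (E n)) \<in> {0..1}) U"
    by (intro always_eventually allI ratio_01) auto
  have "((\<lambda>n. real (card (C n \<inter> E n)) / real (card (E n))) \<longlongrightarrow> \<gamma>) U"
    using ultra_lim[OF U ev01] gam by simp
  moreover have "eventually (\<lambda>n. real (card (C n \<inter> E n)) / real (card (E n)) \<le> 1) U"
    using ev01 by (auto elim: eventually_mono)
  ultimately have g1: "\<gamma> \<le> 1" using Ubot by (rule tendsto_upperbound)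
  have gg: "\<gamma>\<^sup>2 \<le> \<gamma>" using g1 \<open>\<gamma> > 0\<close> by (simp add: power2_eq_square mult_left_le)
  have pos: "\<gamma>\<^sup>2 - \<epsilon> > 0" using assms(9) by simp
  define sep where "sep F \<longleftrightarrow> (\<forall>f\<in>F. \<forall>f'\<in>F. f \<noteq> f' \<longrightarrow> sfun G U E C f f' \<le> \<epsilon>)" for F
  define k where "k = (\<gamma> - \<epsilon>) / (\<gamma>\<^sup>2 - \<epsilon>)"
  have bound: "int (card F) \<le> \<lfloor>k\<rfloor>" if "finite F" "F \<subseteq> carrier G" "sep F" for F
  proof -
    define m where "m = real (card F)"
    have cb: "(m * \<gamma>)\<^sup>2 \<le> m * \<gamma> + m * (m - 1) * \<epsilon>"
      unfolding m_def using claimB[OF U fol IC that(1,2) gam] that(3) unfolding sep_def by blast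
    have "m * (\<gamma>\<^sup>2 - \<epsilon>) \<le> \<gamma> - \<epsilon>"
    proof (cases "m = 0")
      case True then show ?thesis using gg assms(9) by simp
    next
      case False
      then have mp: "m > 0" unfolding m_def by simp
      have "m * (m * (\<gamma>\<^sup>2 - \<epsilon>)) \<le> m * (\<gamma> - \<epsilon>)"
        using cb by (simp add: power2_eq_square algebra_simps)
      then show ?thesis using mp by simp
    qed
    then have "m \<le> k" unfolding k_def using pos by (simp add: pos_le_divide_eq)
    then show ?thesis unfolding m_def by (simp add: le_floor_iff)
  qed
  define K where "K = nat \<lfloor>k\<rfloor>"
  have bound': "card F \<le> K" if "finite F" "F \<subseteq> carrier G" "sep F" for F
    using bound[OF that] unfolding K_def by linarith
  have Dmem: "inv\<^bsub>G\<^esub> f \<otimes>\<^bsub>G\<^esub> f' \<in> Dset G U E \<epsilon> C" if "f \<in> carrier G" "f' \<in> carrier G" "sfun G U E C f f' > \<epsilon>" for f f'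
    using claimA[OF U fol IC that(1,2)] that unfolding Dset_def by simp
  show ?thesis
  proof (intro allI impI ballI)
    fix P g0 assume P: "P \<subseteq> carrier G" and g0: "g0 \<in> P"
    define S where "S = {F. F \<subseteq> P \<and> finite F \<and> g0 \<in> F \<and> sep F}"
    have "{g0} \<in> S" unfolding S_def sep_def using g0 by auto
    have fin: "finite (card ` S)"
      by (rule finite_subset[of _ "{..K}"]) (use P bound' in \<open>auto simp: S_def\<close>)
    define N where "N = Max (card ` S)"
    have "N \<in> card ` S" unfolding N_def using fin \<open>{g0} \<in> S\<close> by (intro Max_in) auto
    then obtain F where F: "F \<in> S" "card F = N" by auto
    have maxN: "card F' \<le> N" if "F' \<in> S" for F'
      unfolding N_def using fin that by (intro Max_ge) auto
    have FP: "F \<subseteq> P" "finite F" "g0 \<in> F" "sep F" using F unfolding S_def by auto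
    have FG: "F \<subseteq> carrier G" using FP P by auto
    have "P \<subseteq> F <#>\<^bsub>G\<^esub> Dset G U E \<epsilon> C"
    proof
      fix p assume p: "p \<in> P"
      have pG: "p \<in> carrier G" using p P by auto
      obtain f where f: "f \<in> F" "sfun G U E C f p > \<epsilon>"
      proof (cases "p \<in> F")
        case True
        have "sfun G U E C p p = \<gamma>" using sfun_diag[OF U fol IC pG] gam by simp
        then show ?thesis using that[OF True] gg assms(9) by simp
      next
        case False
        have "card (insert p F) = N + 1" using False FP F by simp
        then have "insert p F \<notin> S" using maxN by fastforce
        then have "\<not> sep (insert p F)" unfolding S_def using FP p by auto
        then obtain a b where ab: "a \<in> insert p F" "b \<in> insert p F" "a \<noteq> b" "sfun G U E C a b > \<epsilon>"
          unfolding sep_def by force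
        show ?thesis
        proof (cases "a = p")
          case True
          then have "b \<in> F" using ab by auto
          moreover have "sfun G U E C b p > \<epsilon>" using ab True sfun_sym by metis
          ultimately show ?thesis by (rule that)
        next
          case False
          then have a: "a \<in> F" using ab by auto
          have "b = p" using FP(4) a ab unfolding sep_def by force
          then show ?thesis using that[OF a] ab by simp
        qed
      qed
      have fG: "f \<in> carrier G" using f FG by auto
      have d: "inv\<^bsub>G\<^esub> f \<otimes>\<^bsub>G\<^esub> p \<in> Dset G U E \<epsilon> C" using Dmem[OF fG pG f(2)] .
      have "p = f \<otimes>\<^bsub>G\<^esub> (inv\<^bsub>G\<^esub> f \<otimes>\<^bsub>G\<^esub> p)" using fG pG by (simp add: m_assoc[symmetric])
      then show "p \<in> F <#>\<^bsub>G\<^esub> Dset G U E \<epsilon> C" unfolding set_mult_def using f(1) d by blast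
    qed
    then show "\<exists>F\<subseteq>P. finite F \<and> g0 \<in> F \<and> int (card F) \<le> \<lfloor>(\<gamma> - \<epsilon>) / (\<gamma>\<^sup>2 - \<epsilon>)\<rfloor> \<and>
           P \<subseteq> F <#>\<^bsub>G\<^esub> Dset G U E \<epsilon> C"
      using FP bound[OF FP(2) FG FP(4)] unfolding k_def by blast
  qed
qed
end
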